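(* For all $N\in\mathbb{N}$ and all $n\in\{0,1,\dots,N\}$ we have $\mathbf{1}_{\Omega^N_n}\|Y^N_n\|\le D^N_n$ pointwise on $\Omega$.
   Context: Standing setting: $T\in(0,\infty)$; $(\Omega,\mathcal{F},\mathbb{P})$ is a probability space with a normal filtration $(\mathcal{F}_t)_{t\in[0,T]}$; $d,m\in\mathbb{N}$; $W$ is an $m$-dimensional standard $(\mathcal{F}_t)$-Brownian motion; $\xi\colon\Omega\to\mathbb{R}^d$ is $\mathcal{F}_0$-measurable with $\mathbb{E}[\|\xi\|^p]<\infty$ for all $p\in[1,\infty)$. $\|\cdot\|$ is the Euclidean norm on vectors and the operator norm on matrices. $\mu\colon\mathbb{R}^d\to\mathbb{R}^d$ is $C^1$, $\sigma\colon\mathbb{R}^d\to\mathbb{R}^{d\times m}$, and there is $c\in(0,\infty)$ with $\|\mu'(x)\|\le c(1+\|x\|^c)$, $\|\sigma(x)-\sigma(y)\|\le c\|x-y\|$, $\langle x-y,\mu(x)-\mu(y)\rangle\le c\|x-y\|^2$ for all $x,y$. Let $\Delta W^N_n:=W_{(n+1)T/N}-W_{nT/N}$; tamed Euler scheme: $Y^N_0=\xi$, $Y^N_{n+1}=Y^N_n+\frac{(T/N)\mu(Y^N_n)}{1+(T/N)\|\mu(Y^N_n)\|}+\sigma(Y^N_n)\Delta W^N_n$ for $n\in\{0,\dots,N-1\}$. Let $\lambda:=(1+2c+T+\|\mu(0)\|+\|\sigma(0)\|)^4$, $\alpha^N_n:=\mathbf{1}_{\{\|Y^N_n\|\ge1\}}\big\langle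 \frac{Y^N_n}{\|Y^N_n\|},\frac{\sigma(Y^N_n)}{\|Y^N_n\|}\Delta W^N_n\big\rangle$ (defined as $0$ when $\|Y^N_n\|<1$), and $D^N_n:=(\lambda+\|\xi\|)\exp\big(\lambda+\sup_{u\in\{0,\dots,n\}}\sum_{k=u}^{n-1}[\lambda\|\Delta W^N_k\|^2+\alpha^N_k]\big)$ for $n\in\{0,\dots,N\}$ (empty sums are $0$). Let $\Omega^N_n:=\{\omega\in\Omega:\ \sup_{k\in\{0,\dots,n-1\}}D^N_k(\omega)\le N^{1/(2c)},\ \sup_{k\in\{0,\dots,n-1\}}\|\Delta W^N_k(\omega)\|\le1\}$, with $\Omega^N_0=\Omega$. *)

theory Defs
  imports "HOL-Analysis.Analysis"
begin

definition opnorm :: "real^'m^'d \<Rightarrow> real" where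
  "opnorm A = onorm (\<lambda>v. A *v v)"

definition dW :: "real \<Rightarrow> nat \<Rightarrow> (real \<Rightarrow> 'a \<Rightarrow> real^'m) \<Rightarrow> nat \<Rightarrow> 'a \<Rightarrow> real^'m" where
  "dW T N W n \<omega> = W (real (Suc n) * T / real N) \<omega> - W (real n * T / real N) \<omega>"

primrec tamedY :: "(real^'d \<Rightarrow> real^'d) \<Rightarrow> (real^'d \<Rightarrow> real^'m^'d) \<Rightarrow> real \<Rightarrow> nat
    \<Rightarrow> ('a \<Rightarrow> real^'d) \<Rightarrow> (real \<Rightarrow> 'a \<Rightarrow> real^'m) \<Rightarrow> nat \<Rightarrow> 'a \<Rightarrow> real^'d" where
  "tamedY \<mu> \<sigma> T N \<xi> W 0 \<omega> = \<xi> \<omega>"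
| "tamedY \<mu> \<sigma> T N \<xi> W (Suc n) \<omega> =
     (let y = tamedY \<mu> \<sigma> T N \<xi> W n \<omega>
      in y + ((T / real N) / (1 + (T / real N) * norm (\<mu> y))) *\<^sub>R \<mu> y
           + \<sigma> y *v dW T N W n \<omega>)"

definition lam :: "real \<Rightarrow> real \<Rightarrow> (real^'d \<Rightarrow> real^'d) \<Rightarrow> (real^'d \<Rightarrow> real^'m^'d) \<Rightarrow> real" where
  "lam c T \<mu> \<sigma> = (1 + 2 * c + T + norm (\<mu> 0) + opnorm (\<sigma> 0)) ^ 4"

definition alphaN :: "(real^'d \<Rightarrow> real^'d) \<Rightarrow> (real^'d \<Rightarrow> real^'m^'d) \<Rightarrow> real \<Rightarrow> nat
    \<Rightarrow> ('a \<Rightarrow> real^'d) \<Rightarrow> (real \<Rightarrow> 'a \<Rightarrow> real^'m) \<Rightarrow> nat \<Rightarrow> 'a \<Rightarrow> real" where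
  "alphaN \<mu> \<sigma> T N \<xi> W n \<omega> =
     (let y = tamedY \<mu> \<sigma> T N \<xi> W n \<omega>
      in if norm y \<ge> 1
         then ((1 / norm y) *\<^sub>R y) \<bullet> ((1 / norm y) *\<^sub>R (\<sigma> y *v dW T N W n \<omega>))
         else 0)"

definition DN :: "real \<Rightarrow> (real^'d \<Rightarrow> real^'d) \<Rightarrow> (real^'d \<Rightarrow> real^'m^'d) \<Rightarrow> real \<Rightarrow> nat
    \<Rightarrow> ('a \<Rightarrow> real^'d) \<Rightarrow> (real \<Rightarrow> 'a \<Rightarrow> real^'m) \<Rightarrow> nat \<Rightarrow> 'a \<Rightarrow> real" where
  "DN c \<mu> \<sigma> T N \<xi> W n \<omega> =
     (lam c T \<mu> \<sigma> + norm (\<xi> \<omega>)) *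
     exp (lam c T \<mu> \<sigma> +
          Max ((\<lambda>u. \<Sum>k\<in>{u..<n}. lam c T \<mu> \<sigma> * (norm (dW T N W k \<omega>))\<^sup>2
                                      + alphaN \<mu> \<sigma> T N \<xi> W k \<omega>) ` {0..n}))"

definition OmegaN :: "real \<Rightarrow> (real^'d \<Rightarrow> real^'d) \<Rightarrow> (real^'d \<Rightarrow> real^'m^'d) \<Rightarrow> real \<Rightarrow> nat
    \<Rightarrow> ('a \<Rightarrow> real^'d) \<Rightarrow> (real \<Rightarrow> 'a \<Rightarrow> real^'m) \<Rightarrow> nat \<Rightarrow> 'a set" where
  "OmegaN c \<mu> \<sigma> T N \<xi> W n =
     {\<omega>. (\<forall>k<n. DN c \<mu> \<sigma> T N \<xi> W k \<omega> \<le> real N powr (1 / (2 * c)))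
        \<and> (\<forall>k<n. norm (dW T N W k \<omega>) \<le> 1)}"

end

theory Submission
  imports Defs
begin

lemma opnorm_mul: "norm (A *v v) \<le> opnorm A * norm v"
  unfolding opnorm_def by (rule onorm) simp

lemma opnorm_nonneg: "0 \<le> opnorm A"
  unfolding opnorm_def by (rule onorm_pos_le) simp

lemma sigma_vec_bound:
  assumes "\<And>x y. opnorm (\<sigma> x - \<sigma> y) \<le> c * norm (x - y)"
  shows "norm (\<sigma> y *v v) \<le> (opnorm (\<sigma> 0) + c * norm y) * norm v"
proof -
  have "\<sigma> y *v v = \<sigma> 0 *v v + (\<sigma> y - \<sigma> 0) *v v"
    by (simp add: matrix_vector_mult_diff_rdistrib)
  hence "norm (\<sigma> y *v v) \<le> norm (\<sigma> 0 *v v) + norm ((\<sigma> y - \<sigma> 0) *v v)"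
    by (metis norm_triangle_ineq)
  also have "\<dots> \<le> opnorm (\<sigma> 0) * norm v + opnorm (\<sigma> y - \<sigma> 0) * norm v"
    by (intro add_mono opnorm_mul)
  also have "\<dots> \<le> opnorm (\<sigma> 0) * norm v + c * norm y * norm v"
    using assms[of y 0] by (intro add_mono mult_right_mono) auto
  finally show ?thesis by (simp add: algebra_simps)
qed

lemma mu_bound:
  fixes \<mu> :: "real^'d \<Rightarrow> real^'d"
  assumes mu_deriv: "\<And>x. (\<mu> has_derivative blinfun_apply (\<mu>' x)) (at x)"
    and mu'_growth: "\<And>x. norm (\<mu>' x) \<le> c * (1 + norm x powr c)"
    and c: "0 < c" and R: "norm y \<le> R"
  shows "norm (\<mu> y - \<mu> 0) \<le> c * (1 + R powr c) * norm y"
proof -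
  have "norm (\<mu> y - \<mu> 0) \<le> c * (1 + R powr c) * norm (y - 0)"
  proof (rule differentiable_bound[where S="cball 0 R" and f'="\<lambda>x. blinfun_apply (\<mu>' x)"])
    show "convex (cball (0::real^'d) R)" by simp
    show "(\<mu> has_derivative blinfun_apply (\<mu>' x)) (at x within cball 0 R)" for x
      using mu_deriv has_derivative_at_withinI by blast
    show "onorm (blinfun_apply (\<mu>' x)) \<le> c * (1 + R powr c)" if "x \<in> cball 0 R" for x
    proof -
      have "norm x powr c \<le> R powr c" using that c by (intro powr_mono2) auto
      hence "c * (1 + norm x powr c) \<le> c * (1 + R powr c)" using c by simp
      thus ?thesis using mu'_growth[of x] by (simp add: norm_blinfun.rep_eq[symmetric])
    qed
    show "y \<in> cball 0 R" using R by simp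
    show "0 \<in> cball (0::real^'d) R" using order_trans[OF norm_ge_zero R] by simp
  qed
  thus ?thesis by simp
qed

lemma norm_sq_bound:
  fixes y g s :: "'a::real_inner"
  shows "(norm (y+g+s))^2 \<le> (norm y)^2 + 2*(y\<bullet>g) + 2*(y\<bullet>s) + 2*(norm g)^2 + 2*(norm s)^2"
proof -
  have "0 \<le> (g - s) \<bullet> (g - s)" by simp
  thus ?thesis
    by (simp add: power2_norm_eq_inner inner_add_left inner_add_right inner_diff_left
        inner_diff_right inner_commute algebra_simps)
qed

lemma step_big:
  fixes y m s :: "real^'d"
  assumes r: "1 \<le> norm y" and h: "0 < h" and A: "y \<bullet> m \<le> A * (norm y)^2" "0 \<le> A"
    and B: "h^2 * (norm m)^2 \<le> B * (norm y)^2"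
    and C: "norm s \<le> C * norm y * w" "0 \<le> C" "0 \<le> w"
    and al: "y \<bullet> s = (norm y)^2 * a"
  shows "norm (y + (h / (1 + h * norm m)) *\<^sub>R m + s)
     \<le> norm y * exp (h*A + B + C^2*w^2 + a)"
proof -
  define h' where "h' = h / (1 + h * norm m)"
  define r where "r = norm y"
  have r1: "1 \<le> r" using r r_def by simp
  have h'0: "0 \<le> h'" using h by (simp add: h'_def)
  have h'h: "h' \<le> h" using h unfolding h'_def by (simp add: divide_le_eq)
  have "y \<bullet> (h' *\<^sub>R m) = h' * (y \<bullet> m)" by simp
  also have "\<dots> \<le> h' * (A * r^2)" using A h'0 by (simp add: r_def mult_left_mono)
  also have "\<dots> \<le> h * (A * r^2)" using h'h A by (intro mult_right_mono) auto
  finally have g1: "y \<bullet> (h' *\<^sub>R m) \<le> h * A * r^2" by simp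
  have "(norm (h' *\<^sub>R m))^2 = h'^2 * (norm m)^2" by (simp add: power_mult_distrib)
  also have "\<dots> \<le> h^2 * (norm m)^2" using h'0 h'h by (intro mult_right_mono power_mono) auto
  finally have g2: "(norm (h' *\<^sub>R m))^2 \<le> B * r^2" using B r_def by simp
  have "(norm s)^2 \<le> (C * r * w)^2" using C by (intro power_mono) (auto simp: r_def)
  hence s2: "(norm s)^2 \<le> C^2 * w^2 * r^2" by (simp add: power_mult_distrib mult_ac)
  define x where "x = h*A + B + C^2*w^2 + a"
  have ys: "y \<bullet> s = r^2 * a" using al r_def by simp
  have "(norm (y + h' *\<^sub>R m + s))^2 \<le> r^2 + 2*(y\<bullet>(h' *\<^sub>R m)) + 2*(y\<bullet>s) + 2*(norm (h' *\<^sub>R m))^2 + 2*(norm s)^2"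
    using norm_sq_bound[of y "h' *\<^sub>R m" s] by (simp add: r_def)
  also have "\<dots> \<le> r^2 + 2*(h*A*r^2) + 2*(r^2 * a) + 2*(B*r^2) + 2*(C^2 * w^2 * r^2)"
    using g1 g2 s2 ys by linarith
  also have "\<dots> = r^2 * (1 + 2*x)" unfolding x_def by algebra
  also have "\<dots> \<le> r^2 * exp (2*x)" 
    using exp_ge_add_one_self[of "2*x"] by (intro mult_left_mono) auto
  also have "\<dots> = (r * exp x)^2" unfolding exp_double power_mult_distrib ..
  finally have sq: "(norm (y + h' *\<^sub>R m + s))^2 \<le> (r * exp x)^2" .
  have "norm (y + h' *\<^sub>R m + s) \<le> r * exp x"
    by (rule power2_le_imp_le[OF sq]) (use r1 in simp)
  thus ?thesis unfolding h'_def x_def r_def .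
qed


lemma final_bound:
  fixes b :: "nat \<Rightarrow> real"
  assumes "u \<le> n" "n \<le> N" "1 \<le> N" "0 \<le> L"
  shows "(\<Sum>j\<in>{u..<n}. L / real N + b j) \<le> L + Max ((\<lambda>u. \<Sum>k\<in>{u..<n}. b k) ` {0..n})"
proof -
  have "(\<Sum>j\<in>{u..<n}. L / real N + b j) = real (n - u) * (L / real N) + (\<Sum>j\<in>{u..<n}. b j)"
    by (simp add: sum.distrib)
  also have "real (n - u) * (L / real N) \<le> L"
  proof -
    have "real (n - u) \<le> real N" using assms by simp
    hence "real (n - u) * (L / real N) \<le> real N * (L / real N)"
      using assms by (intro mult_right_mono) auto
    also have "\<dots> = L" using assms by simp
    finally show ?thesis .
  qed
  hence "real (n - u) * (L / real N) + (\<Sum>j\<in>{u..<n}. b j) \<le> L + (\<Sum>j\<in>{u..<n}. b j)" by simp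
  also have "(\<Sum>j\<in>{u..<n}. b j) \<le> Max ((\<lambda>u. \<Sum>k\<in>{u..<n}. b k) ` {0..n})"
    using assms by (intro Max_ge) auto
  finally show ?thesis by simp
qed

lemma lam_facts:
  fixes T c m0 s0 :: real
  assumes "0 < T" "0 < c" "0 \<le> m0" "0 \<le> s0"
  defines "L \<equiv> (1 + 2 * c + T + m0 + s0) ^ 4"
  shows "(s0 + c)^2 \<le> L" "T * (c + m0) + T^2 * (m0 + 2*c)^2 \<le> L"
    "1 + T * (m0 + 2*c) + s0 + c \<le> L" "0 \<le> L"
proof -
  define a where "a = 1 + 2 * c + T + m0 + s0"
  define q where "q = m0 + 2*c"
  define t where "t = T * q"
  have a1: "1 \<le> a" using assms by (simp add: a_def)
  have La: "L = (a^2)^2" by (simp add: L_def a_def flip: power_mult)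
  have a2: "a^2 \<le> (a^2)^2" using a1
    by (metis le_add_same_cancel1 less_le_trans linorder_not_le mult_le_cancel_left1 one_le_power power2_eq_square zero_le_one)
  have t0: "0 \<le> t" using assms by (simp add: t_def q_def)
  have "a^2 = (1 + T + q + s0)^2" by (simp add: a_def q_def algebra_simps)
  also have "\<dots> = 1 + 2*T + 2*q + 2* s0 + (T+q+s0)^2" by (simp add: power2_eq_square algebra_simps)
  also have "(T+q+s0)^2 = T^2 + q^2 + s0^2 + 2*t + 2*T* s0 + 2*q* s0" by (simp add: power2_eq_square algebra_simps t_def)
  finally have aexp: "a^2 = 1 + 2*T + 2*q + 2* s0 + (T^2 + q^2 + s0^2 + 2*t + 2*T* s0 + 2*q* s0)" .
  have nn: "0 \<le> T^2" "0 \<le> q^2" "0 \<le> s0^2" "0 \<le> 2 * T * s0" "0 \<le> 2 * q * s0" "0 \<le> s0" "0 \<le> q" "0 \<le> T"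
    using assms by (auto simp: q_def)
  have A1: "1 + 2*t \<le> a^2" using aexp nn t0 by linarith
  have cq: "c \<le> 2*q" using assms by (simp add: q_def)
  have A3: "1 + t + s0 + c \<le> a^2" using aexp nn t0 cq assms by linarith
  show "0 \<le> L" by (simp add: La)
  show "(s0 + c)^2 \<le> L"
  proof -
    have "s0 + c \<le> a" using assms by (simp add: a_def)
    hence "(s0+c)^2 \<le> a^2" using assms by (intro power_mono) auto
    thus ?thesis using a2 La by simp
  qed
  show "1 + T * (m0 + 2*c) + s0 + c \<le> L" using A3 a2 La by (simp add: t_def q_def)
  show "T * (c + m0) + T^2 * (m0 + 2*c)^2 \<le> L"
  proof -
    have "T * (c + m0) \<le> t" using assms by (simp add: t_def q_def mult_left_mono)
    moreover have "T^2 * (m0 + 2*c)^2 = t^2" by (simp add: t_def q_def power_mult_distrib)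
    moreover have "t + t^2 \<le> (1 + 2*t)^2" using t0 by (simp add: power2_eq_square algebra_simps)
    moreover have "(1 + 2*t)^2 \<le> (a^2)^2" using A1 t0 by (intro power_mono) auto
    ultimately show ?thesis using La by linarith
  qed
qed

theorem lemma3p1:
  fixes T c :: real
    and \<mu> :: "real^'d \<Rightarrow> real^'d"
    and \<mu>' :: "real^'d \<Rightarrow> ((real^'d) \<Rightarrow>\<^sub>L (real^'d))"
    and \<sigma> :: "real^'d \<Rightarrow> real^'m^'d"
    and \<xi> :: "'a \<Rightarrow> real^'d"
    and W :: "real \<Rightarrow> 'a \<Rightarrow> real^'m"
    and N n :: nat
  assumes T_pos: "0 < T"
    and c_pos: "0 < c"
    and mu_deriv: "\<And>x. (\<mu> has_derivative blinfun_apply (\<mu>' x)) (at x)"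
    and mu_C1: "continuous_on UNIV \<mu>'"
    and mu'_growth: "\<And>x. norm (\<mu>' x) \<le> c * (1 + norm x powr c)"
    and sigma_lip: "\<And>x y. opnorm (\<sigma> x - \<sigma> y) \<le> c * norm (x - y)"
    and mu_mono: "\<And>x y. (x - y) \<bullet> (\<mu> x - \<mu> y) \<le> c * (norm (x - y))\<^sup>2"
    and N_pos: "1 \<le> N"
    and n_le: "n \<le> N"
  shows "\<forall>\<omega>. indicator (OmegaN c \<mu> \<sigma> T N \<xi> W n) \<omega> * norm (tamedY \<mu> \<sigma> T N \<xi> W n \<omega>)
              \<le> DN c \<mu> \<sigma> T N \<xi> W n \<omega>"
proof
  fix \<omega>
  define L where "L = lam c T \<mu> \<sigma>"
  define m0 where "m0 = norm (\<mu> 0)"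
  define s0 where "s0 = opnorm (\<sigma> 0)"
  define h where "h = T / real N"
  define Y where "Y = (\<lambda>k. tamedY \<mu> \<sigma> T N \<xi> W k \<omega>)"
  define w where "w = (\<lambda>k. norm (dW T N W k \<omega>))"
  define al where "al = (\<lambda>k. alphaN \<mu> \<sigma> T N \<xi> W k \<omega>)"
  define b where "b = (\<lambda>k. L * (w k)^2 + al k)"
  define P where "P = L + norm (\<xi> \<omega>)"
  define Om where "Om = (\<lambda>k. \<omega> \<in> OmegaN c \<mu> \<sigma> T N \<xi> W k)"
  define q where "q = m0 + 2*c"
  have m00: "0 \<le> m0" by (simp add: m0_def)
  have s00: "0 \<le> s0" by (simp add: s0_def opnorm_nonneg)
  have Lf: "(s0 + c)^2 \<le> L" "T * (c + m0) + T^2 * (m0 + 2*c)^2 \<le> L"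
    "1 + T * (m0 + 2*c) + s0 + c \<le> L" "0 \<le> L"
    using lam_facts[OF T_pos c_pos m00 s00] by (simp_all add: L_def lam_def m0_def s0_def)
  have Npos: "0 < real N" using N_pos by simp
  have h0: "0 < h" using T_pos Npos by (simp add: h_def)
  have hT: "h \<le> T" using T_pos N_pos by (simp add: h_def divide_le_eq)
  have P0: "0 \<le> P" using Lf by (simp add: P_def)
  have DNeq: "DN c \<mu> \<sigma> T N \<xi> W k \<omega> = P * exp (L + Max ((\<lambda>u. \<Sum>j\<in>{u..<k}. b j) ` {0..k}))" for k
    by (simp add: DN_def P_def L_def b_def w_def al_def)
  have fin: "norm (Y k) \<le> DN c \<mu> \<sigma> T N \<xi> W k \<omega>"
    if "u \<le> k" "k \<le> N" "norm (Y k) \<le> P * exp (\<Sum>j\<in>{u..<k}. L / real N + b j)" for u k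
  proof -
    have "exp (\<Sum>j\<in>{u..<k}. L / real N + b j) \<le> exp (L + Max ((\<lambda>u. \<Sum>j\<in>{u..<k}. b j) ` {0..k}))"
      using final_bound[OF that(1,2) N_pos Lf(4), of b] by simp
    hence "P * exp (\<Sum>j\<in>{u..<k}. L / real N + b j) \<le> P * exp (L + Max ((\<lambda>u. \<Sum>j\<in>{u..<k}. b j) ` {0..k}))"
      using P0 by (rule mult_left_mono)
    thus ?thesis using that(3) DNeq by simp
  qed
  have OmSuc: "Om k \<and> DN c \<mu> \<sigma> T N \<xi> W k \<omega> \<le> real N powr (1 / (2 * c)) \<and> w k \<le> 1"
    if "Om (Suc k)" for k
    using that by (auto simp: Om_def OmegaN_def w_def)
  have S: "k \<le> N \<longrightarrow> Om k \<longrightarrow> (\<exists>u\<le>k. norm (Y k) \<le> P * exp (\<Sum>j\<in>{u..<k}. L / real N + b j))" for k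
  proof (induction k)
    case 0
    show ?case by (auto simp: Y_def P_def Lf(4) intro!: exI[of _ 0])
  next
    case (Suc k)
    show ?case
    proof (intro impI)
      assume kN: "Suc k \<le> N" and Omk1: "Om (Suc k)"
      have Omk: "Om k" and Dk: "DN c \<mu> \<sigma> T N \<xi> W k \<omega> \<le> real N powr (1 / (2 * c))" and wk: "w k \<le> 1"
        using OmSuc[OF Omk1] by auto
      obtain u where u: "u \<le> k" "norm (Y k) \<le> P * exp (\<Sum>j\<in>{u..<k}. L / real N + b j)"
        using Suc.IH kN Omk by auto
      define y where "y = Y k"
      define s where "s = \<sigma> y *v dW T N W k \<omega>"
      have Y1: "Y (Suc k) = y + (h / (1 + h * norm (\<mu> y))) *\<^sub>R \<mu> y + s"
        by (simp add: Y_def y_def s_def h_def Let_def)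
      have sb: "norm s \<le> (s0 + c * norm y) * w k"
        unfolding s_def s0_def w_def by (rule sigma_vec_bound[OF sigma_lip])
      have w0: "0 \<le> w k" by (simp add: w_def)
      show "\<exists>u\<le>Suc k. norm (Y (Suc k)) \<le> P * exp (\<Sum>j\<in>{u..<Suc k}. L / real N + b j)"
      proof (cases "1 \<le> norm y")
        case True
        define r where "r = norm y"
        have r1: "1 \<le> r" using True by (simp add: r_def)
        have rD: "r \<le> real N powr (1 / (2 * c))"
          using fin[OF u(1) _ u(2)] kN Dk by (simp add: r_def y_def)
        define p where "p = r powr c"
        have p1: "1 \<le> p" using r1 c_pos by (simp add: p_def ge_one_powr_ge_zero)
        have p2: "p^2 \<le> real N"
        proof -
          have "p^2 = r powr (2*c)" by (simp add: p_def power2_eq_square powr_add[symmetric])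
          also have "\<dots> \<le> (real N powr (1 / (2 * c))) powr (2*c)"
            using r1 rD c_pos by (intro powr_mono2) auto
          also have "\<dots> = real N" using c_pos Npos by (simp add: powr_powr)
          finally show ?thesis .
        qed
        have rp1: "1 \<le> r * p" using mult_mono[OF r1 p1] r1 by simp
        have mub: "norm (\<mu> y - \<mu> 0) \<le> c * (1 + p) * r"
          using mu_bound[OF mu_deriv mu'_growth c_pos, of y r] by (simp add: r_def p_def)
        have "norm (\<mu> y) \<le> m0 + c * (1 + p) * r"
          using mub norm_triangle_ineq2[of "\<mu> y" "\<mu> 0"] by (simp add: m0_def)
        also have "\<dots> \<le> q * (r * p)"
        proof -
          have "m0 \<le> m0 * (r * p)" using m00 rp1 by (simp add: mult_le_cancel_left1)
          moreover have "c * r \<le> c * (r * p)" using c_pos r1 p1 by (simp add: mult_le_cancel_left1)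
          ultimately show ?thesis by (simp add: q_def algebra_simps)
        qed
        finally have muy: "norm (\<mu> y) \<le> q * (r * p)" .
        have q0: "0 \<le> q" using m00 c_pos by (simp add: q_def)
        have B: "h^2 * (norm (\<mu> y))^2 \<le> (T^2 * q^2 / real N) * (norm y)^2"
        proof -
          have "(norm (\<mu> y))^2 \<le> (q * (r * p))^2" using muy by (intro power_mono) auto
          also have "\<dots> = q^2 * r^2 * p^2" by (simp add: power_mult_distrib)
          also have "\<dots> \<le> q^2 * r^2 * real N" using p2 by (intro mult_left_mono) auto
          finally have "h^2 * (norm (\<mu> y))^2 \<le> h^2 * (q^2 * r^2 * real N)"
            by (intro mult_left_mono) auto
          also have "\<dots> = (T^2 * q^2 / real N) * (norm y)^2"
            using Npos by (simp add: h_def r_def power2_eq_square field_simps)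
          finally show ?thesis .
        qed
        have A: "y \<bullet> \<mu> y \<le> (c + m0) * (norm y)^2"
        proof -
          have "y \<bullet> \<mu> y = (y - 0) \<bullet> (\<mu> y - \<mu> 0) + y \<bullet> \<mu> 0" by (simp add: inner_diff_right)
          also have "\<dots> \<le> c * r^2 + r * m0"
            using mu_mono[of y 0] norm_cauchy_schwarz[of y "\<mu> 0"] by (simp add: r_def m0_def)
          also have "r * m0 \<le> r^2 * m0" using r1 m00 by (intro mult_right_mono) (auto simp: power2_eq_square)
          finally show ?thesis by (simp add: r_def algebra_simps)
        qed
        have C: "norm s \<le> (s0 + c) * norm y * w k"
        proof -
          have "s0 + c * norm y \<le> (s0 + c) * norm y" using s00 True by (simp add: algebra_simps mult_le_cancel_left1)
          hence "(s0 + c * norm y) * w k \<le> (s0 + c) * norm y * w k" using w0 by (rule mult_right_mono)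
          thus ?thesis using sb by simp
        qed
        have alk: "y \<bullet> s = (norm y)^2 * al k"
        proof -
          have ny: "norm y \<noteq> 0" using True by auto
          have "al k = ((1 / norm y) *\<^sub>R y) \<bullet> ((1 / norm y) *\<^sub>R s)"
            using True by (simp add: al_def alphaN_def Y_def y_def s_def Let_def)
          also have "\<dots> = (y \<bullet> s) / (norm y)^2" by (simp add: power2_eq_square)
          finally show ?thesis using ny by simp
        qed
        have step: "norm (Y (Suc k)) \<le> norm y * exp (h * (c + m0) + T^2 * q^2 / real N + (s0 + c)^2 * (w k)^2 + al k)"
          unfolding Y1
          by (rule step_big[OF True h0 A _ B C _ w0 alk]) (use c_pos m00 s00 in auto)
        have e1: "h * (c + m0) + T^2 * q^2 / real N \<le> L / real N"
        proof -
          have "h * (c + m0) + T^2 * q^2 / real N = (T * (c + m0) + T^2 * q^2) / real N"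
            by (simp add: h_def add_divide_distrib)
          also have "\<dots> \<le> L / real N" using Lf(2) Npos by (intro divide_right_mono) (auto simp: q_def)
          finally show ?thesis .
        qed
        have e2: "(s0 + c)^2 * (w k)^2 \<le> L * (w k)^2" using Lf(1) by (intro mult_right_mono) auto
        have "norm (Y (Suc k)) \<le> norm y * exp (L / real N + b k)"
        proof -
          have "h * (c + m0) + T^2 * q^2 / real N + (s0 + c)^2 * (w k)^2 + al k \<le> L / real N + b k"
            using e1 e2 by (simp add: b_def)
          hence "exp (h * (c + m0) + T^2 * q^2 / real N + (s0 + c)^2 * (w k)^2 + al k) \<le> exp (L / real N + b k)"
            by simp
          hence "norm y * exp (h * (c + m0) + T^2 * q^2 / real N + (s0 + c)^2 * (w k)^2 + al k) \<le> norm y * exp (L / real N + b k)"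
            by (intro mult_left_mono) auto
          thus ?thesis using step by linarith
        qed
        also have "\<dots> \<le> P * exp (\<Sum>j\<in>{u..<k}. L / real N + b j) * exp (L / real N + b k)"
          using u(2) by (intro mult_right_mono) (auto simp: y_def)
        also have "\<dots> = P * exp (\<Sum>j\<in>{u..<Suc k}. L / real N + b j)"
          using u(1) by (simp add: sum.atLeastLessThan_Suc exp_add)
        finally show ?thesis using u(1) by (intro exI[of _ u]) auto
      next
        case False
        have mub: "norm (\<mu> y - \<mu> 0) \<le> c * (1 + 1 powr c) * norm y"
          using mu_bound[OF mu_deriv mu'_growth c_pos, of y 1] False by simp
        have "c * (1 + 1 powr c) * norm y \<le> c * 2 * 1" using False c_pos by (intro mult_mono) auto
        hence "norm (\<mu> y) \<le> m0 + 2 * c"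
          using norm_triangle_ineq2[of "\<mu> y" "\<mu> 0"] mub by (simp add: m0_def)
        have hp: "norm ((h / (1 + h * norm (\<mu> y))) *\<^sub>R \<mu> y) \<le> T * (m0 + 2*c)"
        proof -
          have "norm ((h / (1 + h * norm (\<mu> y))) *\<^sub>R \<mu> y) = h / (1 + h * norm (\<mu> y)) * norm (\<mu> y)"
            using h0 by simp
          also have "\<dots> \<le> h * norm (\<mu> y)"
            using h0 by (intro mult_right_mono) (auto simp: divide_le_eq)
          also have "\<dots> \<le> T * (m0 + 2*c)"
            using \<open>norm (\<mu> y) \<le> m0 + 2 * c\<close> hT h0 by (intro mult_mono) auto
          finally show ?thesis .
        qed
        have sp: "norm s \<le> s0 + c"
        proof -
          have "(s0 + c * norm y) * w k \<le> (s0 + c) * 1"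
            using False s00 c_pos w0 wk by (intro mult_mono) auto
          thus ?thesis using sb by simp
        qed
        have "norm (Y (Suc k)) \<le> norm y + norm ((h / (1 + h * norm (\<mu> y))) *\<^sub>R \<mu> y) + norm s"
          unfolding Y1 using norm_triangle_ineq[of "y + (h / (1 + h * norm (\<mu> y))) *\<^sub>R \<mu> y" s]
            norm_triangle_ineq[of y "(h / (1 + h * norm (\<mu> y))) *\<^sub>R \<mu> y"] by linarith
        also have "\<dots> \<le> L" using False hp sp Lf(3) by linarith
        also have "\<dots> \<le> P" by (simp add: P_def)
        finally show ?thesis by (intro exI[of _ "Suc k"]) auto
      qed
    qed
  qed
  show "indicator (OmegaN c \<mu> \<sigma> T N \<xi> W n) \<omega> * norm (tamedY \<mu> \<sigma> T N \<xi> W n \<omega>)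
              \<le> DN c \<mu> \<sigma> T N \<xi> W n \<omega>"
  proof (cases "Om n")
    case True
    then obtain u where "u \<le> n" "norm (Y n) \<le> P * exp (\<Sum>j\<in>{u..<n}. L / real N + b j)"
      using S[of n] n_le by auto
    from fin[OF this(1) n_le this(2)] True show ?thesis by (simp add: Om_def Y_def)
  next
    case False
    have "0 \<le> DN c \<mu> \<sigma> T N \<xi> W n \<omega>" using DNeq P0 by simp
    thus ?thesis using False by (simp add: Om_def)
  qed
qed

end
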